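(* Let $\Lambda$ be a row-finite $k$-graph with no sources and $R$ a commutative ring with $1$. Let $\mu,\nu\in\Lambda$ with $s(\mu)=s(\nu)$ and $r\in R\setminus\{0\}$ such that $r\,s_\mu s_{\nu^*}\in\mathcal{D}'$. Then $(\mu,\nu)$ is a cycline pair.
   Context: A $k$-graph is a countable category $\Lambda$ (vertices $\Lambda^0$, paths, maps $r,s$) with a degree functor $d:\Lambda\to\mathbb{N}^k$ satisfying unique factorization: if $d(\lambda)=m+n$ there are unique $\mu,\nu$ with $s(\mu)=r(\nu)$, $d(\mu)=m,d(\nu)=n$, $\lambda=\mu\nu$. $v\Lambda=\{\lambda:r(\lambda)=v\}$, $v\Lambda^n$ those of degree $n$; row-finite with no sources means each $v\Lambda^n$ is finite and nonempty. ${\rm KP}_R(\Lambda)$ is the universal $R$-algebra generated by $p_v$ ($v\in\Lambda^0$), $s_\lambda,s_{\lambda^*}$ ($d(\lambda)\ne0$) with relations (KP1) $p_v$ mutually orthogonal idempotents; (KP2) $s_\lambda s_\mu=s_{\lambda\mu}$, $s_{\mu^*}s_{\lambda^*}=s_{(\lambda\mu)^*}$, $p_{r(\lambda)}s_\lambda=s_\lambda=s_\lambda p_{s(\lambda)}$, $p_{s(\lambda)}s_{\lambda^*}=s_{\lambda^*}=s_{\lambda^*}p_{r(\lambda)}$ when $r(\mu)=s(\lambda)$; (KP3) $s_{\lambda^*}s_\mu=\delta_{\lambda,\mu}p_{s(\lambda)}$ when $d(\lambda)=d(\mu)$; (KP4) $p_v=\sum_{\lambda\in v\Lambda^n}s_\lambda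 s_{\lambda^*}$ for $n\ne0$. Convention $s_v=s_{v^*}=p_v$. $\mathcal{D}$ is the $R$-subalgebra generated by $\{s_\mu s_{\mu^*}:\mu\in\Lambda\}$, and $\mathcal{D}'=\{a\in{\rm KP}_R(\Lambda): ad=da\ \forall d\in\mathcal{D}\}$. A pair $(\alpha,\beta)$ with $s(\alpha)=s(\beta)$ is a cycline pair if $s_{\alpha\gamma}s_{(\alpha\gamma)^*}=s_{\beta\gamma}s_{(\beta\gamma)^*}$ for all $\gamma\in s(\alpha)\Lambda$. *)

theory Defs
  imports Main "HOL-Library.Function_Algebras" "HOL-Library.Countable_Set"
begin

text \<open>A k-graph is given by its set of morphisms (paths) L, range and source maps r s
(objects/vertices are represented by their identity morphisms, so r and s map paths
to paths), composition c (c lam mu = lam mu, defined when s lam = r mu) and the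
degree functor d into N^k, with N^k rendered as 'k => nat for a finite type 'k.\<close>

definition kgraph ::
  "'p set \<Rightarrow> ('p \<Rightarrow> 'p) \<Rightarrow> ('p \<Rightarrow> 'p) \<Rightarrow> ('p \<Rightarrow> 'p \<Rightarrow> 'p) \<Rightarrow> ('p \<Rightarrow> ('k::finite \<Rightarrow> nat)) \<Rightarrow> bool"
where
  "kgraph L r s c d \<longleftrightarrow>
     countable L \<and>
     (\<forall>l\<in>L. r l \<in> L \<and> s l \<in> L \<and> r (r l) = r l \<and> s (r l) = r l \<and>
             r (s l) = s l \<and> s (s l) = s l \<and>
             c (r l) l = l \<and> c l (s l) = l \<and> d (r l) = 0 \<and> d (s l) = 0) \<and>
     (\<forall>l\<in>L. \<forall>m\<in>L. s l = r m \<longrightarrow>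
        c l m \<in> L \<and> r (c l m) = r l \<and> s (c l m) = s m \<and> d (c l m) = d l + d m) \<and>
     (\<forall>l\<in>L. \<forall>m\<in>L. \<forall>n\<in>L. s l = r m \<and> s m = r n \<longrightarrow> c (c l m) n = c l (c m n)) \<and>
     (\<forall>l\<in>L. \<forall>m n. d l = m + n \<longrightarrow>
        (\<exists>!(a, b). a \<in> L \<and> b \<in> L \<and> s a = r b \<and> d a = m \<and> d b = n \<and> c a b = l))"

definition vertices :: "'p set \<Rightarrow> ('p \<Rightarrow> 'p) \<Rightarrow> 'p set" where
  "vertices L r = r ` L"

definition vLn :: "'p set \<Rightarrow> ('p \<Rightarrow> 'p) \<Rightarrow> ('p \<Rightarrow> 'k \<Rightarrow> nat) \<Rightarrow> 'p \<Rightarrow> ('k \<Rightarrow> nat) \<Rightarrow> 'p set" where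
  "vLn L r d v n = {l \<in> L. r l = v \<and> d l = n}"

definition row_finite_no_sources ::
  "'p set \<Rightarrow> ('p \<Rightarrow> 'p) \<Rightarrow> ('p \<Rightarrow> 'k \<Rightarrow> nat) \<Rightarrow> bool" where
  "row_finite_no_sources L r d \<longleftrightarrow>
     (\<forall>v\<in>vertices L r. \<forall>n. finite (vLn L r d v n) \<and> vLn L r d v n \<noteq> {})"

text \<open>Generators p_v, s_lam, s_lam* .\<close>
datatype 'p kpgen = Pg 'p | Sg 'p | Stg 'p

definition validgen :: "'p set \<Rightarrow> ('p \<Rightarrow> 'p) \<Rightarrow> ('p \<Rightarrow> 'k \<Rightarrow> nat) \<Rightarrow> 'p kpgen \<Rightarrow> bool" where
  "validgen L r d g \<longleftrightarrow>
     (case g of Pg v \<Rightarrow> v \<in> vertices L r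
              | Sg l \<Rightarrow> l \<in> L \<and> d l \<noteq> 0
              | Stg l \<Rightarrow> l \<in> L \<and> d l \<noteq> 0)"

text \<open>Free (non-unital) R-algebra on the generators: finitely supported R-valued
functions on nonempty words in the generators; multiplication is concatenation
convolution.\<close>
definition freealg :: "'p set \<Rightarrow> ('p \<Rightarrow> 'p) \<Rightarrow> ('p \<Rightarrow> 'k \<Rightarrow> nat) \<Rightarrow> ('p kpgen list \<Rightarrow> 'r::comm_ring_1) set" where
  "freealg L r d = {f. finite {w. f w \<noteq> 0} \<and>
      (\<forall>w. f w \<noteq> 0 \<longrightarrow> w \<noteq> [] \<and> (\<forall>g\<in>set w. validgen L r d g))}"

definition fmul :: "('g list \<Rightarrow> 'r::comm_ring_1) \<Rightarrow> ('g list \<Rightarrow> 'r) \<Rightarrow> 'g list \<Rightarrow> 'r" where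
  "fmul f g = (\<lambda>w. \<Sum>i\<le>length w. f (take i w) * g (drop i w))"

definition fsmult :: "'r::comm_ring_1 \<Rightarrow> ('g list \<Rightarrow> 'r) \<Rightarrow> 'g list \<Rightarrow> 'r" where
  "fsmult a f = (\<lambda>w. a * f w)"

definition gen :: "'g \<Rightarrow> 'g list \<Rightarrow> 'r::comm_ring_1" where
  "gen x = (\<lambda>w. if w = [x] then 1 else 0)"

text \<open>p_v, and s_lam, s_lam* with the convention s_v = s_v* = p_v for degree-0 paths
(which are exactly the vertices).\<close>
definition pv :: "'p \<Rightarrow> 'p kpgen list \<Rightarrow> 'r::comm_ring_1" where
  "pv v = gen (Pg v)"

definition sp :: "('p \<Rightarrow> 'k \<Rightarrow> nat) \<Rightarrow> 'p \<Rightarrow> 'p kpgen list \<Rightarrow> 'r::comm_ring_1" where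
  "sp d l = (if d l = 0 then gen (Pg l) else gen (Sg l))"

definition sst :: "('p \<Rightarrow> 'k \<Rightarrow> nat) \<Rightarrow> 'p \<Rightarrow> 'p kpgen list \<Rightarrow> 'r::comm_ring_1" where
  "sst d l = (if d l = 0 then gen (Pg l) else gen (Stg l))"

text \<open>The relations (KP1)-(KP4), each written as an element x - y of the free algebra.\<close>
definition kp_relators ::
  "'p set \<Rightarrow> ('p \<Rightarrow> 'p) \<Rightarrow> ('p \<Rightarrow> 'p) \<Rightarrow> ('p \<Rightarrow> 'p \<Rightarrow> 'p) \<Rightarrow> ('p \<Rightarrow> ('k::finite \<Rightarrow> nat))
   \<Rightarrow> ('p kpgen list \<Rightarrow> 'r::comm_ring_1) set" where
  "kp_relators L r s c d =
     {fmul (pv v) (pv w) - (if v = w then pv v else 0) | v w. v \<in> vertices L r \<and> w \<in> vertices L r}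
   \<union> {fmul (sp d l) (sp d m) - sp d (c l m) | l m. l \<in> L \<and> m \<in> L \<and> d l \<noteq> 0 \<and> d m \<noteq> 0 \<and> r m = s l}
   \<union> {fmul (sst d m) (sst d l) - sst d (c l m) | l m. l \<in> L \<and> m \<in> L \<and> d l \<noteq> 0 \<and> d m \<noteq> 0 \<and> r m = s l}
   \<union> {fmul (pv (r l)) (sp d l) - sp d l | l. l \<in> L \<and> d l \<noteq> 0}
   \<union> {fmul (sp d l) (pv (s l)) - sp d l | l. l \<in> L \<and> d l \<noteq> 0}
   \<union> {fmul (pv (s l)) (sst d l) - sst d l | l. l \<in> L \<and> d l \<noteq> 0}
   \<union> {fmul (sst d l) (pv (r l)) - sst d l | l. l \<in> L \<and> d l \<noteq> 0}
   \<union> {fmul (sst d l) (sp d m) - (if l = m then pv (s l) else 0) | l m.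
        l \<in> L \<and> m \<in> L \<and> d l = d m \<and> d l \<noteq> 0}
   \<union> {pv v - (\<Sum>l\<in>vLn L r d v n. fmul (sp d l) (sst d l)) | v n. v \<in> vertices L r \<and> n \<noteq> 0}"

text \<open>The two-sided ideal of the free algebra generated by the relators;
KP_R(Lambda) = freealg / kp_ideal.\<close>
inductive_set kp_ideal ::
  "'p set \<Rightarrow> ('p \<Rightarrow> 'p) \<Rightarrow> ('p \<Rightarrow> 'p) \<Rightarrow> ('p \<Rightarrow> 'p \<Rightarrow> 'p) \<Rightarrow> ('p \<Rightarrow> ('k::finite \<Rightarrow> nat))
   \<Rightarrow> ('p kpgen list \<Rightarrow> 'r::comm_ring_1) set"
  for L r s c d where
  rel: "x \<in> kp_relators L r s c d \<Longrightarrow> x \<in> kp_ideal L r s c d"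
| zero: "0 \<in> kp_ideal L r s c d"
| add: "x \<in> kp_ideal L r s c d \<Longrightarrow> y \<in> kp_ideal L r s c d \<Longrightarrow> x + y \<in> kp_ideal L r s c d"
| smult: "x \<in> kp_ideal L r s c d \<Longrightarrow> fsmult a x \<in> kp_ideal L r s c d"
| lmult: "x \<in> kp_ideal L r s c d \<Longrightarrow> y \<in> freealg L r d \<Longrightarrow> fmul y x \<in> kp_ideal L r s c d"
| rmult: "x \<in> kp_ideal L r s c d \<Longrightarrow> y \<in> freealg L r d \<Longrightarrow> fmul x y \<in> kp_ideal L r s c d"

definition kp_eq ::
  "'p set \<Rightarrow> ('p \<Rightarrow> 'p) \<Rightarrow> ('p \<Rightarrow> 'p) \<Rightarrow> ('p \<Rightarrow> 'p \<Rightarrow> 'p) \<Rightarrow> ('p \<Rightarrow> ('k::finite \<Rightarrow> nat))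
   \<Rightarrow> ('p kpgen list \<Rightarrow> 'r::comm_ring_1) \<Rightarrow> ('p kpgen list \<Rightarrow> 'r) \<Rightarrow> bool" where
  "kp_eq L r s c d x y \<longleftrightarrow> x - y \<in> kp_ideal L r s c d"

text \<open>Lifts to the free algebra of the R-subalgebra D generated by {s_mu s_mu* : mu in Lambda}.\<close>
inductive_set diag_sub ::
  "'p set \<Rightarrow> ('p \<Rightarrow> 'k \<Rightarrow> nat) \<Rightarrow> ('p kpgen list \<Rightarrow> 'r::comm_ring_1) set"
  for L d where
  gen: "m \<in> L \<Longrightarrow> fmul (sp d m) (sst d m) \<in> diag_sub L d"
| add: "x \<in> diag_sub L d \<Longrightarrow> y \<in> diag_sub L d \<Longrightarrow> x + y \<in> diag_sub L d"
| smult: "x \<in> diag_sub L d \<Longrightarrow> fsmult a x \<in> diag_sub L d"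
| mult: "x \<in> diag_sub L d \<Longrightarrow> y \<in> diag_sub L d \<Longrightarrow> fmul x y \<in> diag_sub L d"

text \<open>x represents an element of the commutant D' of D in KP_R(Lambda).\<close>
definition in_commutant ::
  "'p set \<Rightarrow> ('p \<Rightarrow> 'p) \<Rightarrow> ('p \<Rightarrow> 'p) \<Rightarrow> ('p \<Rightarrow> 'p \<Rightarrow> 'p) \<Rightarrow> ('p \<Rightarrow> ('k::finite \<Rightarrow> nat))
   \<Rightarrow> ('p kpgen list \<Rightarrow> 'r::comm_ring_1) \<Rightarrow> bool" where
  "in_commutant L r s c d x \<longleftrightarrow>
     (\<forall>y\<in>diag_sub L d. kp_eq L r s c d (fmul x y) (fmul y x))"

definition cycline_pair ::
  "'p set \<Rightarrow> ('p \<Rightarrow> 'p) \<Rightarrow> ('p \<Rightarrow> 'p) \<Rightarrow> ('p \<Rightarrow> 'p \<Rightarrow> 'p) \<Rightarrow> ('p \<Rightarrow> ('k::finite \<Rightarrow> nat))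
   \<Rightarrow> 'r::comm_ring_1 itself \<Rightarrow> 'p \<Rightarrow> 'p \<Rightarrow> bool" where
  "cycline_pair L r s c d R a b \<longleftrightarrow>
     a \<in> L \<and> b \<in> L \<and> s a = s b \<and>
     (\<forall>g\<in>L. r g = s a \<longrightarrow>
        kp_eq L r s c d
          (fmul (sp d (c a g)) (sst d (c a g)) :: 'p kpgen list \<Rightarrow> 'r)
          (fmul (sp d (c b g)) (sst d (c b g))))"

end

theory Submission
  imports Defs
begin



definition supp :: "('g list \<Rightarrow> 'r::comm_ring_1) \<Rightarrow> 'g list set" where
  "supp f = {w. f w \<noteq> 0}"

abbreviation fin where "fin f \<equiv> finite (supp f)"

definition splits :: "'g list \<Rightarrow> ('g list \<times> 'g list) set" where
  "splits w = {(u, v). u @ v = w}"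

lemma splits_eq: "splits w = (\<lambda>i. (take i w, drop i w)) ` {..length w}"
proof -
  have "(u, v) \<in> (\<lambda>i. (take i w, drop i w)) ` {..length w}" if "u @ v = w" for u v
    using that by (auto intro!: image_eqI[of _ _ "length u"])
  thus ?thesis unfolding splits_def by auto
qed

lemma finite_splits[simp]: "finite (splits w)"
  unfolding splits_eq by simp

lemma fmul_alt: "fmul f g w = (\<Sum>p\<in>splits w. f (fst p) * g (snd p))"
proof -
  have "inj_on (\<lambda>i. (take i w, drop i w)) {..length w}"
    by (rule inj_onI) (metis atMost_iff length_take min.absorb2 prod.inject)
  thus ?thesis unfolding fmul_def splits_eq by (simp add: sum.reindex)
qed

lemma fmul_assoc: "fmul (fmul f g) h = fmul f (fmul g h)"
proof
  fix w
  have L: "fmul (fmul f g) h w = (\<Sum>z\<in>Sigma (splits w) (\<lambda>pt. splits (fst pt)).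
        f (fst (snd z)) * g (snd (snd z)) * h (snd (fst z)))"
    unfolding fmul_alt[of _ h] fmul_alt[of f g]
    by (simp add: sum_distrib_right sum.Sigma split_def)
  have R: "fmul f (fmul g h) w = (\<Sum>z\<in>Sigma (splits w) (\<lambda>uq. splits (snd uq)).
        f (fst (fst z)) * g (fst (snd z)) * h (snd (snd z)))"
    unfolding fmul_alt[of f] fmul_alt[of g h]
    by (simp add: sum_distrib_left sum.Sigma split_def mult.assoc)
  show "fmul (fmul f g) h w = fmul f (fmul g h) w"
    unfolding L R
    apply (rule sum.reindex_bij_witness[where i="\<lambda>((u,q),(v,t)). ((u@v, t),(u,v))"
          and j="\<lambda>((p,t),(u,v)). ((u, v@t),(v,t))"])
    by (auto simp: splits_def)
qed

lemma fmul_add_left: "fmul (f + g) h = fmul f h + fmul g h"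
  by (simp add: fmul_def fun_eq_iff algebra_simps sum.distrib)
lemma fmul_add_right: "fmul f (g + h) = fmul f g + fmul f h"
  by (simp add: fmul_def fun_eq_iff algebra_simps sum.distrib)
lemma fmul_diff_left: "fmul (f - g) h = fmul f h - fmul g h"
  by (simp add: fmul_def fun_eq_iff algebra_simps sum_subtractf)
lemma fmul_diff_right: "fmul f (g - h) = fmul f g - fmul f h"
  by (simp add: fmul_def fun_eq_iff algebra_simps sum_subtractf)
lemma fmul_smult_left: "fmul (fsmult a f) g = fsmult a (fmul f g)"
  by (simp add: fmul_def fsmult_def fun_eq_iff algebra_simps sum_distrib_left)
lemma fmul_smult_right: "fmul f (fsmult a g) = fsmult a (fmul f g)"
  by (simp add: fmul_def fsmult_def fun_eq_iff algebra_simps sum_distrib_left)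
lemma fmul_zero_left[simp]: "fmul 0 g = 0"
  by (simp add: fmul_def fun_eq_iff)
lemma fmul_zero_right[simp]: "fmul f 0 = 0"
  by (simp add: fmul_def fun_eq_iff)
lemma fmul_sum_right: "fmul f (\<Sum>i\<in>S. F i) = (\<Sum>i\<in>S. fmul f (F i))"
proof (induction S rule: infinite_finite_induct)
  case (insert a S) thus ?case using fmul_add_right by (metis sum.insert)
next
  case (infinite A) thus ?case by (metis sum.infinite fmul_zero_right)
qed (metis sum.empty fmul_zero_right)
lemma fmul_sum_left: "fmul (\<Sum>i\<in>S. F i) g = (\<Sum>i\<in>S. fmul (F i) g)"
proof (induction S rule: infinite_finite_induct)
  case (insert a S) thus ?case using fmul_add_left by (metis sum.insert)
next
  case (infinite A) thus ?case by (metis sum.infinite fmul_zero_left)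
qed (metis sum.empty fmul_zero_left)

lemma supp_fmul: "supp (fmul f g) \<subseteq> (\<lambda>(u,v). u @ v) ` (supp f \<times> supp g)"
proof
  fix w assume "w \<in> supp (fmul f g)"
  then obtain p where "p \<in> splits w" "f (fst p) * g (snd p) \<noteq> 0"
    unfolding supp_def fmul_alt by (metis (mono_tags, lifting) mem_Collect_eq sum.neutral)
  thus "w \<in> (\<lambda>(u,v). u @ v) ` (supp f \<times> supp g)"
    unfolding supp_def splits_def by (auto intro!: image_eqI[of _ _ p])
qed

lemma fin_fmul: "fin f \<Longrightarrow> fin g \<Longrightarrow> fin (fmul f g)"
  using supp_fmul finite_subset by (metis finite_SigmaI finite_imageI)
lemma fin_add: "fin f \<Longrightarrow> fin g \<Longrightarrow> fin (f + g)"
  by (rule finite_subset[of _ "supp f \<union> supp g"]) (auto simp: supp_def)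
lemma fin_diff: "fin f \<Longrightarrow> fin g \<Longrightarrow> fin (f - g)"
  by (rule finite_subset[of _ "supp f \<union> supp g"]) (auto simp: supp_def)
lemma fin_smult: "fin f \<Longrightarrow> fin (fsmult a f)"
  by (rule finite_subset[of _ "supp f"]) (auto simp: supp_def fsmult_def)
lemma fin_zero[simp]: "fin 0"
  by (simp add: supp_def)
lemma fin_gen[simp]: "fin (gen x)"
  by (rule finite_subset[of _ "{[x]}"]) (auto simp: supp_def gen_def)
lemma fin_sum: "(\<And>i. i \<in> S \<Longrightarrow> fin (F i)) \<Longrightarrow> fin (\<Sum>i\<in>S. F i)"
  by (induction S rule: infinite_finite_induct) (auto intro: fin_add)

text \<open>representations by partial maps\<close>

fun phis :: "('g \<Rightarrow> 'x \<Rightarrow> 'x option) \<Rightarrow> 'g list \<Rightarrow> 'x \<Rightarrow> 'x option" where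
  "phis phi [] x = Some x"
| "phis phi (g # w) x = Option.bind (phi g x) (phis phi w)"

definition app :: "('g \<Rightarrow> 'x \<Rightarrow> 'x option) \<Rightarrow> 'g list \<Rightarrow> ('x \<Rightarrow> 'r::comm_ring_1) \<Rightarrow> 'x \<Rightarrow> 'r" where
  "app phi w h x = (case phis phi w x of None \<Rightarrow> 0 | Some y \<Rightarrow> h y)"

definition Pi :: "('g \<Rightarrow> 'x \<Rightarrow> 'x option) \<Rightarrow> ('g list \<Rightarrow> 'r::comm_ring_1) \<Rightarrow> ('x \<Rightarrow> 'r) \<Rightarrow> 'x \<Rightarrow> 'r" where
  "Pi phi f h x = (\<Sum>w\<in>supp f. f w * app phi w h x)"

lemma phis_append: "phis phi (u @ v) x = Option.bind (phis phi u x) (phis phi v)"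
proof (induction u arbitrary: x)
  case (Cons a u) show ?case by (cases "phi a x") (simp_all add: Cons)
qed simp

lemma app_append: "app phi (u @ v) h x = app phi u (app phi v h) x"
  unfolding app_def phis_append by (auto split: option.splits)

lemma app_lin: "app phi u (\<lambda>y. \<Sum>v\<in>G. a v * F v y) x = (\<Sum>v\<in>G. a v * app phi u (F v) x)"
  unfolding app_def by (auto split: option.splits)

lemma Pi_sup: "finite T \<Longrightarrow> supp f \<subseteq> T \<Longrightarrow> Pi phi f h x = (\<Sum>w\<in>T. f w * app phi w h x)"
  unfolding Pi_def by (rule sum.mono_neutral_left) (auto simp: supp_def)

lemma Pi_mult: assumes "fin f" "fin g"
  shows "Pi phi (fmul f g) h x = Pi phi f (Pi phi g h) x"
proof -
  let ?F = "supp f" let ?G = "supp g"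
  let ?T = "(\<lambda>(u,v). u @ v) ` (?F \<times> ?G)"
  have fT: "finite ?T" using assms by auto
  have "Pi phi f (Pi phi g h) x = (\<Sum>u\<in>?F. f u * (\<Sum>v\<in>?G. g v * app phi u (app phi v h) x))"
    unfolding Pi_def app_lin ..
  also have "\<dots> = (\<Sum>q\<in>?F \<times> ?G. f (fst q) * g (snd q) * app phi (fst q @ snd q) h x)"
    by (simp add: sum.cartesian_product sum_distrib_left mult.assoc app_append split_def)
  finally have R: "Pi phi f (Pi phi g h) x = \<dots>" .
  have "Pi phi (fmul f g) h x = (\<Sum>w\<in>?T. fmul f g w * app phi w h x)"
    by (rule Pi_sup[OF fT supp_fmul])
  also have "\<dots> = (\<Sum>z\<in>Sigma ?T splits. f (fst (snd z)) * g (snd (snd z)) * app phi (fst z) h x)"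
  proof -
    have "(\<Sum>w\<in>?T. fmul f g w * app phi w h x) = (\<Sum>w\<in>?T. \<Sum>p\<in>splits w. f (fst p) * g (snd p) * app phi w h x)"
      unfolding fmul_alt by (simp add: sum_distrib_right)
    also have "\<dots> = (\<Sum>z\<in>Sigma ?T splits. f (fst (snd z)) * g (snd (snd z)) * app phi (fst z) h x)"
      by (subst sum.Sigma[OF fT]) (auto simp: split_def)
    finally show ?thesis .
  qed
  also have "\<dots> = (\<Sum>z\<in>(\<lambda>q. (fst q @ snd q, q)) ` (?F \<times> ?G). f (fst (snd z)) * g (snd (snd z)) * app phi (fst z) h x)"
  proof (rule sum.mono_neutral_right)
    show "finite (Sigma ?T splits)" using fT by auto
    show "(\<lambda>q. (fst q @ snd q, q)) ` (?F \<times> ?G) \<subseteq> Sigma ?T splits"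
      by (auto simp: splits_def)
    show "\<forall>z\<in>Sigma ?T splits - (\<lambda>q. (fst q @ snd q, q)) ` (?F \<times> ?G).
        f (fst (snd z)) * g (snd (snd z)) * app phi (fst z) h x = 0"
    proof
      fix z assume z: "z \<in> Sigma ?T splits - (\<lambda>q. (fst q @ snd q, q)) ` (?F \<times> ?G)"
      then obtain w u v where zz: "z = (w, (u, v))" "u @ v = w" by (auto simp: splits_def)
      have "\<not> (u \<in> ?F \<and> v \<in> ?G)" using z zz by (auto intro!: image_eqI[of _ _ "(u,v)"])
      thus "f (fst (snd z)) * g (snd (snd z)) * app phi (fst z) h x = 0"
        using zz by (auto simp: supp_def)
    qed
  qed
  also have "\<dots> = (\<Sum>q\<in>?F \<times> ?G. f (fst q) * g (snd q) * app phi (fst q @ snd q) h x)"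
    by (subst sum.reindex) (auto simp: inj_on_def)
  finally show ?thesis using R by simp
qed

lemma Pi_add: "fin f \<Longrightarrow> fin g \<Longrightarrow> Pi phi (f + g) h x = Pi phi f h x + Pi phi g h x"
proof -
  assume a: "fin f" "fin g"
  let ?T = "supp f \<union> supp g"
  have "Pi phi (f + g) h x = (\<Sum>w\<in>?T. (f + g) w * app phi w h x)"
    by (rule Pi_sup) (use a in \<open>auto simp: supp_def\<close>)
  moreover have "Pi phi f h x = (\<Sum>w\<in>?T. f w * app phi w h x)" by (rule Pi_sup) (use a in auto)
  moreover have "Pi phi g h x = (\<Sum>w\<in>?T. g w * app phi w h x)" by (rule Pi_sup) (use a in auto)
  ultimately show ?thesis by (simp add: sum.distrib algebra_simps)
qed

lemma Pi_diff: "fin f \<Longrightarrow> fin g \<Longrightarrow> Pi phi (f - g) h x = Pi phi f h x - Pi phi g h x"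
proof -
  assume a: "fin f" "fin g"
  let ?T = "supp f \<union> supp g"
  have "Pi phi (f - g) h x = (\<Sum>w\<in>?T. (f - g) w * app phi w h x)"
    by (rule Pi_sup) (use a in \<open>auto simp: supp_def\<close>)
  moreover have "Pi phi f h x = (\<Sum>w\<in>?T. f w * app phi w h x)" by (rule Pi_sup) (use a in auto)
  moreover have "Pi phi g h x = (\<Sum>w\<in>?T. g w * app phi w h x)" by (rule Pi_sup) (use a in auto)
  ultimately show ?thesis by (simp add: sum_subtractf algebra_simps)
qed

lemma Pi_smult: "fin f \<Longrightarrow> Pi phi (fsmult a f) h x = a * Pi phi f h x"
proof -
  assume a: "fin f"
  have "Pi phi (fsmult a f) h x = (\<Sum>w\<in>supp f. fsmult a f w * app phi w h x)"
    by (rule Pi_sup) (use a in \<open>auto simp: supp_def fsmult_def\<close>)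
  thus ?thesis unfolding Pi_def by (simp add: fsmult_def sum_distrib_left mult.assoc)
qed

lemma Pi_zero[simp]: "Pi phi 0 h x = 0"
  by (simp add: Pi_def supp_def)

lemma Pi_sum: "(\<And>i. i \<in> S \<Longrightarrow> fin (F i)) \<Longrightarrow> Pi phi (\<Sum>i\<in>S. F i) h x = (\<Sum>i\<in>S. Pi phi (F i) h x)"
proof (induction S rule: infinite_finite_induct)
  case (insert a S)
  have "Pi phi (\<Sum>i\<in>insert a S. F i) h x = Pi phi (F a + (\<Sum>i\<in>S. F i)) h x"
    by (subst sum.insert[OF insert.hyps]) (rule refl)
  also have "\<dots> = Pi phi (F a) h x + Pi phi (\<Sum>i\<in>S. F i) h x"
    by (rule Pi_add) (use insert.prems in \<open>auto intro: fin_sum\<close>)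
  also have "\<dots> = (\<Sum>i\<in>insert a S. Pi phi (F i) h x)"
    using insert.IH insert.prems insert.hyps by simp
  finally show ?case .
qed auto

lemma Pi_gen: "Pi phi (gen g) h x = (case phi g x of None \<Rightarrow> 0 | Some y \<Rightarrow> h y)"
proof -
  have "Pi phi (gen g) h x = (\<Sum>w\<in>{[g]}. gen g w * app phi w h x)"
    by (rule Pi_sup) (auto simp: supp_def gen_def)
  thus ?thesis by (simp add: gen_def app_def split: option.splits)
qed

lemma Pi_h0: "Pi phi f (\<lambda>y. 0) z = 0"
  unfolding Pi_def app_def by (auto intro!: sum.neutral split: option.splits)

lemma ideal_Pi:
  fixes L :: "'p set" and r s :: "'p \<Rightarrow> 'p" and c :: "'p \<Rightarrow> 'p \<Rightarrow> 'p"
    and d :: "'p \<Rightarrow> ('k::finite \<Rightarrow> nat)" and phi :: "'p kpgen \<Rightarrow> 'x \<Rightarrow> 'x option"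
    and x :: "'p kpgen list \<Rightarrow> 'r::comm_ring_1"
  assumes rel: "\<And>x :: 'p kpgen list \<Rightarrow> 'r. x \<in> kp_relators L r s c d \<Longrightarrow> fin x \<and> (\<forall>h y. Pi phi x h y = 0)"
    and fa: "\<And>x :: 'p kpgen list \<Rightarrow> 'r. x \<in> freealg L r d \<Longrightarrow> fin x"
    and xI: "x \<in> kp_ideal L r s c d"
  shows "fin x \<and> (\<forall>h y. Pi phi x h y = 0)"
  using xI
proof (induction rule: kp_ideal.induct)
  case (rel x) show ?case by (rule assms(1)[OF rel.hyps])
next
  case zero thus ?case using fin_zero Pi_zero by metis
next
  case (add x y)
  have "fin (x + y)" using add fin_add by blast
  moreover have "Pi phi (x + y) h z = 0" for h z using add Pi_add[of x y phi h z] by auto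
  ultimately show ?case by blast
next
  case (smult x a)
  have "fin (fsmult a x)" using smult fin_smult by blast
  moreover have "Pi phi (fsmult a x) h z = 0" for h z using smult Pi_smult[of x phi a h z] by auto
  ultimately show ?case by blast
next
  case (lmult x y)
  have "fin (fmul y x)" using lmult fin_fmul fa by blast
  moreover have "Pi phi (fmul y x) h z = 0" for h z
  proof -
    have "Pi phi x h = (\<lambda>y. 0)" using lmult by auto
    thus ?thesis using lmult fa Pi_mult[of y x phi h z] Pi_h0 by metis
  qed
  ultimately show ?case by blast
next
  case (rmult x y)
  have "fin (fmul x y)" using rmult fin_fmul fa by blast
  moreover have "Pi phi (fmul x y) h z = 0" for h z using rmult fa Pi_mult[of x y phi h z] by auto
  ultimately show ?case by blast
qed

lemma freealg_fin: "x \<in> freealg L r d \<Longrightarrow> fin x"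
  unfolding freealg_def supp_def by auto




locale kgr =
  fixes L :: "'p set" and r s :: "'p \<Rightarrow> 'p" and c :: "'p \<Rightarrow> 'p \<Rightarrow> 'p"
    and d :: "'p \<Rightarrow> ('k::finite \<Rightarrow> nat)"
  assumes kg: "kgraph L r s c d"
    and rf: "row_finite_no_sources L r d"
begin

lemma basic:
  assumes "l \<in> L"
  shows "r l \<in> L" "s l \<in> L" "r (r l) = r l" "s (r l) = r l" "r (s l) = s l" "s (s l) = s l"
    "c (r l) l = l" "c l (s l) = l" "d (r l) = 0" "d (s l) = 0"
  using kg assms unfolding kgraph_def by blast+

lemma comp:
  assumes "l \<in> L" "m \<in> L" "s l = r m"
  shows "c l m \<in> L" "r (c l m) = r l" "s (c l m) = s m" "d (c l m) = d l + d m"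
  using kg assms unfolding kgraph_def by blast+

lemma assoc:
  assumes "l \<in> L" "m \<in> L" "n \<in> L" "s l = r m" "s m = r n"
  shows "c (c l m) n = c l (c m n)"
  using kg assms unfolding kgraph_def by blast

lemma fact_ex1:
  assumes "l \<in> L" "d l = m + n"
  shows "\<exists>!(a, b). a \<in> L \<and> b \<in> L \<and> s a = r b \<and> d a = m \<and> d b = n \<and> c a b = l"
  using kg assms unfolding kgraph_def by blast

lemma fact_ex:
  assumes "l \<in> L" "d l = m + n"
  obtains a b where "a \<in> L" "b \<in> L" "s a = r b" "d a = m" "d b = n" "c a b = l"
  using fact_ex1[OF assms] by auto

lemma fact_uniq:
  assumes "a \<in> L" "b \<in> L" "a' \<in> L" "b' \<in> L" "s a = r b" "s a' = r b'"
    "d a = d a'" "c a b = c a' b'"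
  shows "a = a' \<and> b = b'"
proof -
  have e1: "d (c a b) = d a + d b" using comp assms by blast
  have e2: "d (c a' b') = d a' + d b'" using comp assms by blast
  have "d b = d b'" using e1 e2 assms by (metis add_left_cancel)
  have "c a b \<in> L" using comp assms by blast
  from fact_ex1[OF this e1] assms \<open>d b = d b'\<close> show ?thesis by auto
qed

lemma deg0:
  assumes "l \<in> L" "d l = 0"
  shows "r l = l" "s l = l"
proof -
  have "d l = 0 + 0" using assms by simp
  have "r l = l \<and> l = s l"
    using fact_uniq[of "r l" l l "s l"] basic[OF assms(1)] assms by auto
  thus "r l = l" "s l = l" by auto
qed

definition pre :: "'p \<Rightarrow> 'p \<Rightarrow> bool" where
  "pre a l \<longleftrightarrow> a \<in> L \<and> (\<exists>b\<in>L. s a = r b \<and> c a b = l)"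

lemma pre_L: "pre a l \<Longrightarrow> l \<in> L"
  unfolding pre_def using comp by blast

lemma pre_refl: "l \<in> L \<Longrightarrow> pre l l"
  unfolding pre_def using basic by metis

lemma pre_comp: "l \<in> L \<Longrightarrow> m \<in> L \<Longrightarrow> s l = r m \<Longrightarrow> pre l (c l m)"
  unfolding pre_def by blast

lemma pre_deg: "pre a l \<Longrightarrow> d a \<le> d l"
  unfolding pre_def using comp by (metis le_add1 le_fun_def plus_fun_def)

lemma pre_uniq: "pre a l \<Longrightarrow> pre a' l \<Longrightarrow> d a = d a' \<Longrightarrow> a = a'"
  unfolding pre_def using fact_uniq by metis

lemma pre_trans: assumes "pre a b" "pre b l" shows "pre a l"
proof -
  obtain e where e: "e \<in> L" "s a = r e" "c a e = b" "a \<in> L" using assms(1) pre_def by auto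
  obtain f where f: "f \<in> L" "s b = r f" "c b f = l" using assms(2) pre_def by auto
  have "s e = r f" using f e comp by metis
  hence "c a (c e f) = l" using assoc e f by metis
  moreover have "c e f \<in> L" "r (c e f) = r e" using comp \<open>s e = r f\<close> e f by auto
  ultimately show ?thesis unfolding pre_def using e by metis
qed

lemma pre_ex: assumes "l \<in> L" "d l = m + n" obtains a where "pre a l" "d a = m"
  using fact_ex[OF assms] pre_def by metis

lemma pre_ex_le: assumes "l \<in> L" "m \<le> d l" obtains a where "pre a l" "d a = m"
proof -
  have "d l = m + (d l - m)" using assms(2) by (simp add: le_fun_def fun_eq_iff)
  thus ?thesis using pre_ex[OF assms(1)] that by blast
qed

lemma pre_mono: assumes "pre a l" "pre a' l" "d a \<le> d a'" shows "pre a a'"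
proof -
  have "a' \<in> L" using assms(2) pre_def by auto
  then obtain a'' where a'': "pre a'' a'" "d a'' = d a" using pre_ex_le assms(3) by metis
  hence "pre a'' l" using pre_trans assms(2) by blast
  hence "a'' = a" using pre_uniq assms(1) a'' by auto
  thus ?thesis using a'' by simp
qed

lemma pre_r: "pre a l \<Longrightarrow> r l = r a"
  unfolding pre_def using comp by metis

definition tail :: "'p \<Rightarrow> 'p \<Rightarrow> 'p" where
  "tail a l = (THE b. b \<in> L \<and> s a = r b \<and> c a b = l)"

lemma tail: assumes "pre a l"
  shows "tail a l \<in> L" "s a = r (tail a l)" "c a (tail a l) = l"
proof -
  have ex: "\<exists>b. b \<in> L \<and> s a = r b \<and> c a b = l" using assms pre_def by auto
  have "a \<in> L" using assms pre_def by auto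
  have "\<exists>!b. b \<in> L \<and> s a = r b \<and> c a b = l"
    using ex fact_uniq \<open>a \<in> L\<close> by metis
  hence "tail a l \<in> L \<and> s a = r (tail a l) \<and> c a (tail a l) = l"
    unfolding tail_def by (rule theI')
  thus "tail a l \<in> L" "s a = r (tail a l)" "c a (tail a l) = l" by auto
qed

lemma tail_eq: "a \<in> L \<Longrightarrow> b \<in> L \<Longrightarrow> s a = r b \<Longrightarrow> tail a (c a b) = b"
  using tail[OF pre_comp] fact_uniq comp by metis

lemma tail_deg: "pre a l \<Longrightarrow> d l = d a + d (tail a l)"
  using tail comp pre_def by metis


lemma le_add_fun: "(m::'k \<Rightarrow> nat) \<le> m + n"
  by (simp add: le_fun_def)

definition W :: "(('k \<Rightarrow> nat) \<Rightarrow> 'p) set" where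
  "W = {x. (\<forall>n. x n \<in> L \<and> d (x n) = n) \<and> (\<forall>n m. n \<le> m \<longrightarrow> pre (x n) (x m))}"

lemma W_L: "x \<in> W \<Longrightarrow> x n \<in> L" and W_d: "x \<in> W \<Longrightarrow> d (x n) = n"
  and W_pre: "x \<in> W \<Longrightarrow> n \<le> m \<Longrightarrow> pre (x n) (x m)"
  unfolding W_def by auto

lemma W_vert: "x \<in> W \<Longrightarrow> r (x 0) = x 0 \<and> s (x 0) = x 0"
  using deg0 W_L W_d by metis

lemma W_r: assumes "x \<in> W" shows "r (x n) = x 0"
proof -
  have "pre (x 0) (x n)" using W_pre[OF assms] by (simp add: le_fun_def)
  thus ?thesis using pre_r W_vert[OF assms] by metis
qed

definition shift :: "('k \<Rightarrow> nat) \<Rightarrow> (('k \<Rightarrow> nat) \<Rightarrow> 'p) \<Rightarrow> ('k \<Rightarrow> nat) \<Rightarrow> 'p" where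
  "shift m x = (\<lambda>n. tail (x m) (x (m + n)))"

lemma shift_W: assumes "x \<in> W" shows "shift m x \<in> W"
proof -
  have P: "\<And>n. pre (x m) (x (m + n))" using W_pre[OF assms] le_add_fun by blast
  have A: "\<And>n. shift m x n \<in> L \<and> d (shift m x n) = n"
  proof -
    fix n
    have "d (x (m+n)) = d (x m) + d (shift m x n)"
      unfolding shift_def using tail_deg[OF P] .
    hence "d (shift m x n) = n" using W_d[OF assms] by (metis add_left_cancel)
    thus "shift m x n \<in> L \<and> d (shift m x n) = n" unfolding shift_def using tail(1)[OF P] by simp
  qed
  have B: "pre (shift m x n) (shift m x n')" if "n \<le> n'" for n n'
  proof -
    have "m + n \<le> m + n'" using that by (simp add: le_fun_def)
    hence pp: "pre (x (m+n)) (x (m+n'))" using W_pre[OF assms] by blast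
    define b where "b = shift m x n"
    define e where "e = tail (x (m+n)) (x (m+n'))"
    have b: "b \<in> L" "s (x m) = r b" "c (x m) b = x (m+n)" using tail[OF P[of n]] b_def shift_def by auto
    have e: "e \<in> L" "s (x (m+n)) = r e" "c (x (m+n)) e = x (m+n')" using tail[OF pp] e_def by auto
    have "s b = r e" using e b comp W_L[OF assms] by metis
    have "x (m+n') = c (x m) (c b e)" using assoc[of "x m" b e] b e \<open>s b = r e\<close> W_L[OF assms] by metis
    moreover have "c b e \<in> L" "r (c b e) = r b" using comp \<open>s b = r e\<close> b e by auto
    ultimately have "shift m x n' = c b e" unfolding shift_def using tail_eq W_L[OF assms] b by metis
    thus ?thesis using pre_comp b e \<open>s b = r e\<close> b_def by metis
  qed
  show ?thesis unfolding W_def using A B by blast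
qed

lemma shift_at0: assumes "x \<in> W" shows "shift m x 0 = s (x m)"
proof -
  have "c (x m) (s (x m)) = x m" "s (x m) \<in> L" "r (s (x m)) = s (x m)" using basic W_L[OF assms] by auto
  thus ?thesis unfolding shift_def using tail_eq W_L[OF assms] by (metis add_0_right)
qed

lemma shift_zero: assumes "x \<in> W" shows "shift 0 x = x"
proof
  fix n
  have "c (x 0) (x n) = x n" using W_r[OF assms] basic W_L[OF assms] by metis
  moreover have "s (x 0) = r (x n)" using W_r[OF assms] W_vert[OF assms] by metis
  ultimately show "shift 0 x n = x n" unfolding shift_def using tail_eq W_L[OF assms] by (metis add_0)
qed

lemma shift_shift: assumes "x \<in> W" shows "shift n (shift m x) = shift (m + n) x"
proof
  fix j
  have P: "\<And>n. pre (x m) (x (m + n))" using W_pre[OF assms] le_add_fun by blast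
  define b where "b = tail (x m) (x (m+n))"
  define b' where "b' = tail (x m) (x (m+(n+j)))"
  define e where "e = tail (x (m+n)) (x (m+n+j))"
  have pp: "pre (x (m+n)) (x (m+n+j))" using W_pre[OF assms] le_add_fun by blast
  have b: "b \<in> L" "s (x m) = r b" "c (x m) b = x (m+n)" using tail[OF P[of n]] b_def by auto
  have e: "e \<in> L" "s (x (m+n)) = r e" "c (x (m+n)) e = x (m+n+j)" using tail[OF pp] e_def by auto
  have "s b = r e" using e b comp W_L[OF assms] by metis
  have "x (m+(n+j)) = c (x m) (c b e)" using assoc[of "x m" b e] b e \<open>s b = r e\<close> W_L[OF assms]
    by (metis add.assoc)
  moreover have "c b e \<in> L" "r (c b e) = r b" using comp \<open>s b = r e\<close> b e by auto
  ultimately have "b' = c b e" unfolding b'_def using tail_eq W_L[OF assms] b by metis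
  hence "tail b b' = e" using tail_eq b e \<open>s b = r e\<close> by metis
  thus "shift n (shift m x) j = shift (m + n) x j" unfolding shift_def b_def b'_def e_def by simp
qed

definition prepend :: "'p \<Rightarrow> (('k \<Rightarrow> nat) \<Rightarrow> 'p) \<Rightarrow> ('k \<Rightarrow> nat) \<Rightarrow> 'p" where
  "prepend l x = (\<lambda>n. THE a. pre a (c l (x n)) \<and> d a = n)"

lemma prep_val: assumes "l \<in> L" "x \<in> W" "x 0 = s l"
  shows "pre (prepend l x n) (c l (x n)) \<and> d (prepend l x n) = n"
proof -
  have sl: "s l = r (x n)" using W_r[OF assms(2)] assms(3) by simp
  have cl: "c l (x n) \<in> L" "d (c l (x n)) = d l + n" using comp[OF assms(1) W_L[OF assms(2)] sl] W_d[OF assms(2)] by auto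
  have "n \<le> d (c l (x n))" using cl by (simp add: le_fun_def)
  then obtain a where "pre a (c l (x n))" "d a = n" using pre_ex_le cl by metis
  hence "\<exists>!a. pre a (c l (x n)) \<and> d a = n" using pre_uniq by blast
  thus ?thesis unfolding prepend_def by (rule theI')
qed

lemma prep_pre: assumes "l \<in> L" "x \<in> W" "x 0 = s l" "n \<le> n'"
  shows "pre (c l (x n)) (c l (x n'))"
proof -
  have sl: "\<And>n. s l = r (x n)" using W_r[OF assms(2)] assms(3) by simp
  obtain e where e: "e \<in> L" "s (x n) = r e" "c (x n) e = x n'" using W_pre[OF assms(2,4)] pre_def by auto
  have "c l (x n') = c (c l (x n)) e" using assoc[of l "x n" e] e sl assms(1) W_L[OF assms(2)] by metis
  moreover have "s (c l (x n)) = r e" using comp[OF assms(1) W_L[OF assms(2)] sl] e by auto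
  moreover have "c l (x n) \<in> L" using comp[OF assms(1) W_L[OF assms(2)] sl] by auto
  ultimately show ?thesis using pre_comp e by metis
qed

lemma prep_char: assumes "l \<in> L" "x \<in> W" "x 0 = s l" "n \<le> n'" "pre a (c l (x n'))" "d a = n"
  shows "prepend l x n = a"
  using prep_val[OF assms(1-3), of n] prep_pre[OF assms(1-4)] pre_trans pre_uniq assms(5,6) by metis

lemma prepend_W: assumes "l \<in> L" "x \<in> W" "x 0 = s l" shows "prepend l x \<in> W"
proof -
  have A: "\<And>n. prepend l x n \<in> L \<and> d (prepend l x n) = n" using prep_val[OF assms] pre_def by auto
  have B: "pre (prepend l x n) (prepend l x n')" if "n \<le> n'" for n n'
  proof -
    have "pre (prepend l x n) (c l (x n'))"
      using prep_val[OF assms, of n] prep_pre[OF assms that] pre_trans by blast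
    thus ?thesis using pre_mono prep_val[OF assms, of n'] A that by metis
  qed
  show ?thesis unfolding W_def using A B by blast
qed

lemma prepend_at: assumes "l \<in> L" "x \<in> W" "x 0 = s l" shows "prepend l x (d l) = l"
proof -
  have sl: "s l = r (x (d l))" using W_r[OF assms(2)] assms(3) by simp
  show ?thesis using prep_char[OF assms order_refl pre_comp[OF assms(1) W_L[OF assms(2)] sl]] by simp
qed

lemma prepend_at0: assumes "l \<in> L" "x \<in> W" "x 0 = s l" shows "prepend l x 0 = r l"
  using W_r[OF prepend_W[OF assms], of "d l"] prepend_at[OF assms] by simp

lemma shift_prepend: assumes "l \<in> L" "x \<in> W" "x 0 = s l" shows "shift (d l) (prepend l x) = x"
proof
  fix n
  have sl: "s l = r (x n)" using W_r[OF assms(2)] assms(3) by simp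
  have cl: "c l (x n) \<in> L" "d (c l (x n)) = d l + n" using comp[OF assms(1) W_L[OF assms(2)] sl] W_d[OF assms(2)] by auto
  have "prepend l x (d l + n) = c l (x n)"
    using prep_char[OF assms order_refl prep_pre[OF assms, of n "d l + n"]] cl(2)
    by (metis le_add_fun add.commute)
  thus "shift (d l) (prepend l x) n = x n"
    unfolding shift_def using prepend_at[OF assms] tail_eq assms(1) W_L[OF assms(2)] sl by metis
qed

lemma prepend_shift: assumes "x \<in> W" "l \<in> L" "x (d l) = l" shows "prepend l (shift (d l) x) = x"
proof
  fix n
  let ?y = "shift (d l) x"
  have yW: "?y \<in> W" using shift_W assms by blast
  have y0: "?y 0 = s l" using shift_at0 assms by simp
  have P: "pre (x (d l)) (x (d l + n))" using W_pre[OF assms(1)] le_add_fun by blast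
  have "c l (?y n) = x (d l + n)" unfolding shift_def using tail(3)[OF P] assms(3) by simp
  moreover have "pre (x n) (x (d l + n))" using W_pre[OF assms(1)] by (metis le_add_fun add.commute)
  ultimately show "prepend l ?y n = x n"
    using prep_char[OF assms(2) yW y0 order_refl] W_d[OF assms(1)] by metis
qed

lemma Z_comp: assumes "x \<in> W" "l \<in> L" "m \<in> L" "s l = r m"
  shows "x (d (c l m)) = c l m \<longleftrightarrow> x (d l) = l \<and> shift (d l) x (d m) = m"
proof -
  have dc: "d (c l m) = d l + d m" using comp assms by auto
  have P: "pre (x (d l)) (x (d l + d m))" using W_pre[OF assms(1)] le_add_fun by blast
  show ?thesis
  proof
    assume h: "x (d (c l m)) = c l m"
    have "pre l (c l m)" using pre_comp assms by auto
    hence "x (d l) = l" using P h dc pre_uniq W_d[OF assms(1)] by metis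
    moreover have "shift (d l) x (d m) = m" unfolding shift_def using h dc \<open>x (d l) = l\<close> tail_eq assms by metis
    ultimately show "x (d l) = l \<and> shift (d l) x (d m) = m" by simp
  next
    assume "x (d l) = l \<and> shift (d l) x (d m) = m"
    thus "x (d (c l m)) = c l m" using tail(3)[OF P] dc unfolding shift_def by metis
  qed
qed

lemma prepend_unique: assumes "z \<in> W" "l \<in> L" "z (d l) = l" "shift (d l) z = x"
  shows "z = prepend l x"
  using prepend_shift[OF assms(1-3)] assms(4) by simp

lemma prepend_prepend: assumes "l \<in> L" "m \<in> L" "s l = r m" "x \<in> W" "x 0 = s m"
  shows "prepend l (prepend m x) = prepend (c l m) x"
proof -
  let ?y = "prepend m x" let ?z = "prepend l ?y"
  have yW: "?y \<in> W" using prepend_W assms by blast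
  have y0: "?y 0 = s l" using prepend_at0 assms by simp
  have zW: "?z \<in> W" using prepend_W[OF assms(1) yW y0] .
  have z1: "?z (d l) = l" using prepend_at[OF assms(1) yW y0] .
  have z2: "shift (d l) ?z = ?y" using shift_prepend[OF assms(1) yW y0] .
  have "?z (d (c l m)) = c l m" using Z_comp[OF zW assms(1-3)] z1 z2 prepend_at[OF assms(2,4,5)] by simp
  moreover have "shift (d (c l m)) ?z = x"
    using comp(4)[OF assms(1-3)] shift_shift[OF zW] z2 shift_prepend[OF assms(2,4,5)] by metis
  moreover have "c l m \<in> L" using comp assms by auto
  ultimately show ?thesis using prepend_unique zW by metis
qed

lemma prepend_vertex: assumes "x \<in> W" "v \<in> L" "d v = 0" "x 0 = v" shows "prepend v x = x"
  using prepend_shift[OF assms(1,2)] assms shift_zero by simp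


lemma vert_s: "l \<in> L \<Longrightarrow> s l \<in> vertices L r"
  unfolding vertices_def using basic by (metis image_eqI)

lemma ext_ex: assumes "lam \<in> L" shows "\<exists>x\<in>W. x (d lam) = lam"
proof -
  have "\<forall>w\<in>vertices L r. \<exists>e. e \<in> vLn L r d w (\<lambda>_. 1)"
    using rf unfolding row_finite_no_sources_def by blast
  then obtain e where e: "\<And>w. w \<in> vertices L r \<Longrightarrow> e w \<in> vLn L r d w (\<lambda>_. 1)" by metis
  define sq where "sq = rec_nat lam (\<lambda>j p. c p (e (s p)))"
  have sq0: "sq 0 = lam" and sqS: "\<And>j. sq (Suc j) = c (sq j) (e (s (sq j)))" unfolding sq_def by auto
  have sqL: "sq j \<in> L \<and> d (sq j) = d lam + (\<lambda>_. j)" for j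
  proof (induction j)
    case 0 thus ?case using sq0 assms by (simp add: fun_eq_iff)
  next
    case (Suc j)
    have ee: "e (s (sq j)) \<in> L" "r (e (s (sq j))) = s (sq j)" "d (e (s (sq j))) = (\<lambda>_. 1)"
      using e[OF vert_s] Suc unfolding vLn_def by auto
    show ?case using comp[of "sq j" "e (s (sq j))"] ee Suc sqS by (auto simp: fun_eq_iff)
  qed
  have sqpre: "pre (sq i) (sq (i + j))" for i j
  proof (induction j)
    case 0 thus ?case using pre_refl sqL by simp
  next
    case (Suc j)
    have ee: "e (s (sq (i+j))) \<in> L" "r (e (s (sq (i+j)))) = s (sq (i+j))"
      using e[OF vert_s] sqL unfolding vLn_def by auto
    have "pre (sq (i+j)) (sq (i + Suc j))" using pre_comp sqL ee sqS by simp
    thus ?case using Suc pre_trans by blast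
  qed
  have sqpre': "i \<le> j \<Longrightarrow> pre (sq i) (sq j)" for i j using sqpre le_Suc_ex by metis
  define N where "N = (\<lambda>n::'k\<Rightarrow>nat. \<Sum>i\<in>UNIV. n i)"
  have Nle: "n \<le> d (sq (N n))" for n
    using sqL unfolding N_def le_fun_def by (simp add: member_le_sum trans_le_add2)
  have Nmono: "n \<le> n' \<Longrightarrow> N n \<le> N n'" for n n' unfolding N_def le_fun_def by (simp add: sum_mono)
  define x where "x = (\<lambda>n. THE a. pre a (sq (N n)) \<and> d a = n)"
  have xv: "pre (x n) (sq (N n)) \<and> d (x n) = n" for n
  proof -
    obtain a where "pre a (sq (N n))" "d a = n" using pre_ex_le sqL Nle by metis
    hence "\<exists>!a. pre a (sq (N n)) \<and> d a = n" using pre_uniq by blast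
    thus ?thesis unfolding x_def by (rule theI')
  qed
  have "x \<in> W" unfolding W_def
  proof (intro CollectI conjI allI impI)
    fix n show "x n \<in> L" using xv pre_def by auto
    show "d (x n) = n" using xv by auto
  next
    fix n m :: "'k \<Rightarrow> nat" assume "n \<le> m"
    hence "pre (x n) (sq (N m))" using xv sqpre' Nmono pre_trans by blast
    thus "pre (x n) (x m)" using xv pre_mono \<open>n \<le> m\<close> by metis
  qed
  moreover have "x (d lam) = lam" using xv sqpre'[of 0] sq0 pre_uniq by (metis zero_le)
  ultimately show ?thesis by blast
qed

end



context kgr begin

definition phi :: "'p kpgen \<Rightarrow> (('k \<Rightarrow> nat) \<Rightarrow> 'p) \<Rightarrow> (('k \<Rightarrow> nat) \<Rightarrow> 'p) option" where
  "phi g x = (case g of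
      Pg v \<Rightarrow> if x \<in> W \<and> x 0 = v then Some x else None
    | Sg l \<Rightarrow> if x \<in> W \<and> x (d l) = l then Some (shift (d l) x) else None
    | Stg l \<Rightarrow> if x \<in> W \<and> x 0 = s l then Some (prepend l x) else None)"

lemma phi_Pg: "phi (Pg v) x = (if x \<in> W \<and> x 0 = v then Some x else None)"
  and phi_Sg: "phi (Sg l) x = (if x \<in> W \<and> x (d l) = l then Some (shift (d l) x) else None)"
  and phi_Stg: "phi (Stg l) x = (if x \<in> W \<and> x 0 = s l then Some (prepend l x) else None)"
  unfolding phi_def by simp_all

lemma fin_pv[simp]: "fin (pv v)" and fin_sp[simp]: "fin (sp d l)" and fin_sst[simp]: "fin (sst d l)"
  unfolding pv_def sp_def sst_def by auto

lemma PI_pv: "Pi phi (pv v) h x = (if x \<in> W \<and> x 0 = v then h x else 0)"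
  by (simp add: pv_def Pi_gen phi_Pg)

lemma PI_sp: assumes "l \<in> L"
  shows "Pi phi (sp d l) h x = (if x \<in> W \<and> x (d l) = l then h (shift (d l) x) else 0)"
proof (cases "d l = 0")
  case True
  thus ?thesis using shift_zero by (auto simp: sp_def Pi_gen phi_Pg phi_Sg phi_Stg)
next
  case False
  thus ?thesis by (auto simp: sp_def Pi_gen phi_Pg phi_Sg phi_Stg)
qed

lemma PI_sst: assumes "l \<in> L"
  shows "Pi phi (sst d l) h x = (if x \<in> W \<and> x 0 = s l then h (prepend l x) else 0)"
proof (cases "d l = 0")
  case True
  thus ?thesis using deg0[OF assms] prepend_vertex[OF _ assms]
    by (auto simp: sst_def Pi_gen phi_Pg phi_Sg phi_Stg)
next
  case False
  thus ?thesis by (auto simp: sst_def Pi_gen phi_Pg phi_Sg phi_Stg)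
qed

lemma PI_proj: assumes "l \<in> L"
  shows "Pi phi (fmul (sp d l) (sst d l)) h x = (if x \<in> W \<and> x (d l) = l then h x else 0)"
proof -
  have "Pi phi (fmul (sp d l) (sst d l)) h x = Pi phi (sp d l) (Pi phi (sst d l) h) x"
    by (rule Pi_mult) auto
  also have "\<dots> = (if x \<in> W \<and> x (d l) = l then h x else 0)"
    unfolding PI_sp[OF assms] PI_sst[OF assms]
    using shift_W shift_at0 prepend_shift assms by auto
  finally show ?thesis .
qed

lemma relators_Pi: assumes "x \<in> kp_relators L r s c d"
  shows "fin x \<and> (\<forall>h y. Pi phi x h y = 0)"
  using assms unfolding kp_relators_def
proof (elim UnE CollectE exE conjE)
  fix v w assume x: "x = fmul (pv v) (pv w) - (if v = w then pv v else 0)"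
  show ?thesis unfolding x
    by (auto simp: Pi_diff fin_diff fin_fmul Pi_mult PI_pv)
next
  fix l m assume x: "x = fmul (sp d l) (sp d m) - sp d (c l m)" and lm: "l \<in> L" "m \<in> L" "r m = s l"
  have cL: "c l m \<in> L" "d (c l m) = d l + d m" using comp lm by auto
  have "Pi phi (sp d l) (Pi phi (sp d m) h) y = Pi phi (sp d (c l m)) h y" for h y
    unfolding PI_sp[OF lm(1)] PI_sp[OF lm(2)] PI_sp[OF cL(1)]
    using Z_comp[OF _ lm(1,2)] lm(3) shift_W shift_shift cL(2) by auto
  thus ?thesis unfolding x by (auto simp: Pi_diff fin_diff fin_fmul Pi_mult)
next
  fix l m assume x: "x = fmul (sst d m) (sst d l) - sst d (c l m)" and lm: "l \<in> L" "m \<in> L" "r m = s l"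
  have cL: "c l m \<in> L" "s (c l m) = s m" using comp lm by auto
  have "Pi phi (sst d m) (Pi phi (sst d l) h) y = Pi phi (sst d (c l m)) h y" for h y
    unfolding PI_sst[OF lm(1)] PI_sst[OF lm(2)] PI_sst[OF cL(1)]
    using prepend_W[OF lm(2)] prepend_at0[OF lm(2)] prepend_prepend[OF lm(1,2)] lm(3) cL(2) by auto
  thus ?thesis unfolding x by (auto simp: Pi_diff fin_diff fin_fmul Pi_mult)
next
  fix l assume x: "x = fmul (pv (r l)) (sp d l) - sp d l" and l: "l \<in> L"
  have "Pi phi (pv (r l)) (Pi phi (sp d l) h) y = Pi phi (sp d l) h y" for h y
  proof -
    have "y \<in> W \<Longrightarrow> y (d l) = l \<Longrightarrow> y 0 = r l" using W_r by metis
    thus ?thesis unfolding PI_sp[OF l] PI_pv by auto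
  qed
  thus ?thesis unfolding x by (auto simp: Pi_diff fin_diff fin_fmul Pi_mult)
next
  fix l assume x: "x = fmul (sp d l) (pv (s l)) - sp d l" and l: "l \<in> L"
  have "Pi phi (sp d l) (Pi phi (pv (s l)) h) y = Pi phi (sp d l) h y" for h y
    unfolding PI_sp[OF l] PI_pv using shift_W shift_at0 by auto
  thus ?thesis unfolding x by (auto simp: Pi_diff fin_diff fin_fmul Pi_mult)
next
  fix l assume x: "x = fmul (pv (s l)) (sst d l) - sst d l" and l: "l \<in> L"
  have "Pi phi (pv (s l)) (Pi phi (sst d l) h) y = Pi phi (sst d l) h y" for h y
    unfolding PI_sst[OF l] PI_pv by auto
  thus ?thesis unfolding x by (auto simp: Pi_diff fin_diff fin_fmul Pi_mult)
next
  fix l assume x: "x = fmul (sst d l) (pv (r l)) - sst d l" and l: "l \<in> L"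
  have "Pi phi (sst d l) (Pi phi (pv (r l)) h) y = Pi phi (sst d l) h y" for h y
    unfolding PI_sst[OF l] PI_pv using prepend_W[OF l] prepend_at0[OF l] by auto
  thus ?thesis unfolding x by (auto simp: Pi_diff fin_diff fin_fmul Pi_mult)
next
  fix l m assume x: "x = fmul (sst d l) (sp d m) - (if l = m then pv (s l) else 0)"
    and lm: "l \<in> L" "m \<in> L" "d l = d m"
  have "Pi phi (sst d l) (Pi phi (sp d m) h) y = Pi phi (if l = m then pv (s l) else 0) h y" for h y
    unfolding PI_sst[OF lm(1)] PI_sp[OF lm(2)] PI_pv
    using prepend_W[OF lm(1)] prepend_at[OF lm(1)] shift_prepend[OF lm(1)] lm(3) by (auto simp: PI_pv)
  thus ?thesis unfolding x by (auto simp: Pi_diff fin_diff fin_fmul Pi_mult)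
next
  fix v n assume x: "x = pv v - (\<Sum>l\<in>vLn L r d v n. fmul (sp d l) (sst d l))"
    and v: "v \<in> vertices L r"
  have fv: "finite (vLn L r d v n)" using rf v unfolding row_finite_no_sources_def by blast
  have A: "(\<Sum>l\<in>vLn L r d v n. Pi phi (fmul (sp d l) (sst d l)) h y) = Pi phi (pv v) h y" for h y
  proof -
    have "(\<Sum>l\<in>vLn L r d v n. Pi phi (fmul (sp d l) (sst d l)) h y)
        = (\<Sum>l\<in>vLn L r d v n. if l = y n then (if y \<in> W then h y else 0) else 0)"
      by (rule sum.cong) (auto simp: PI_proj vLn_def W_d)
    also have "\<dots> = (if y n \<in> vLn L r d v n then (if y \<in> W then h y else 0) else 0)"
      by (rule sum.delta[OF fv])
    also have "\<dots> = Pi phi (pv v) h y"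
      unfolding PI_pv vLn_def using W_L W_d W_r by auto
    finally show ?thesis .
  qed
  have F: "fin (\<Sum>l\<in>vLn L r d v n. fmul (sp d l) (sst d l))" by (rule fin_sum) (auto intro: fin_fmul)
  have C: "Pi phi (\<Sum>l\<in>vLn L r d v n. fmul (sp d l) (sst d l)) h y =
      (\<Sum>l\<in>vLn L r d v n. Pi phi (fmul (sp d l) (sst d l)) h y)" for h y
    by (rule Pi_sum) (auto intro: fin_fmul)
  have E: "Pi phi (\<Sum>l\<in>vLn L r d v n. fmul (sp d l) (sst d l)) h y = Pi phi (pv v) h y" for h y
    using C[of h y] A[of h y] by (rule trans)
  have "Pi phi (pv v - (\<Sum>l\<in>vLn L r d v n. fmul (sp d l) (sst d l))) h y = 0" for h y
    unfolding Pi_diff[OF fin_pv F] E by simp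
  thus ?thesis unfolding x using fin_diff[OF fin_pv F] by blast
qed

lemma ideal_PI: "x \<in> kp_ideal L r s c d \<Longrightarrow> Pi phi x h y = 0"
  using ideal_Pi[of L r s c d phi x] relators_Pi freealg_fin by blast

lemma eq_PI: "kp_eq L r s c d x y \<Longrightarrow> fin x \<Longrightarrow> fin y \<Longrightarrow> Pi phi x h z = Pi phi y h z"
  using ideal_PI[of "x - y" h z] Pi_diff[of x y phi h z] unfolding kp_eq_def by simp

end



context kgr begin

abbreviation proj :: "'p \<Rightarrow> 'p kpgen list \<Rightarrow> 'r::comm_ring_1" where
  "proj l \<equiv> fmul (sp d l) (sst d l)"

lemma Z_eq:
  fixes a :: "'r::comm_ring_1"
  assumes mu: "mu \<in> L" and nu: "nu \<in> L" and smn: "s mu = s nu" and a: "a \<noteq> 0"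
    and com: "in_commutant L r s c d (fsmult a (fmul (sp d mu) (sst d nu)))"
    and g: "g \<in> L" "r g = s mu"
    and y: "y \<in> W"
  shows "y (d (c mu g)) = c mu g \<longleftrightarrow> y (d (c nu g)) = c nu g"
proof -
  define X :: "'p kpgen list \<Rightarrow> 'r" where "X = fsmult a (fmul (sp d mu) (sst d nu))"
  have finX: "fin X" unfolding X_def by (auto intro!: fin_smult fin_fmul)
  have PX: "Pi phi X h z = a * (if z \<in> W \<and> z (d mu) = mu then h (prepend nu (shift (d mu) z)) else 0)" for h z
  proof -
    have "Pi phi X h z = a * Pi phi (sp d mu) (Pi phi (sst d nu) h) z"
      unfolding X_def by (simp add: Pi_smult fin_fmul Pi_mult)
    thus ?thesis unfolding PI_sp[OF mu] PI_sst[OF nu] using shift_W shift_at0 smn by auto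
  qed
  have C: "Pi phi (fmul X (proj l)) h z = Pi phi (fmul (proj l) X) h z" if l: "l \<in> L" for l h z
  proof -
    have "proj l \<in> diag_sub L d" using l by (rule diag_sub.gen)
    hence "kp_eq L r s c d (fmul X (proj l)) (fmul (proj l) X)"
      using com unfolding in_commutant_def X_def by blast
    thus ?thesis by (rule eq_PI) (auto intro!: fin_fmul finX)
  qed
  have C1: "a * (if z \<in> W \<and> z (d mu) = mu then (if prepend nu (shift (d mu) z) \<in> W \<and> prepend nu (shift (d mu) z) (d l) = l then 1 else 0) else 0)
      = (if z \<in> W \<and> z (d l) = l then a * (if z \<in> W \<and> z (d mu) = mu then 1 else 0) else 0)"
    if l: "l \<in> L" for l z
    using C[OF l, of "\<lambda>_. 1" z] unfolding Pi_mult[OF finX fin_fmul[OF fin_sp fin_sst]]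
      Pi_mult[OF fin_fmul[OF fin_sp fin_sst] finX] PX PI_proj[OF l] by simp
  have cm: "c mu g \<in> L" "s mu = r g" using comp mu g by auto
  have cn: "c nu g \<in> L" "s nu = r g" using comp nu g smn by auto
  show ?thesis
  proof
    assume yA: "y (d (c mu g)) = c mu g"
    have y1: "y (d mu) = mu" "shift (d mu) y (d g) = g" using Z_comp[OF y mu g(1) cm(2)] yA by auto
    let ?t = "shift (d mu) y"
    have tW: "?t \<in> W" "?t 0 = s nu" using shift_W[OF y] shift_at0[OF y] y1 smn by auto
    let ?z = "prepend nu ?t"
    have zW: "?z \<in> W" "?z (d nu) = nu" "shift (d nu) ?z = ?t"
      using prepend_W[OF nu tW] prepend_at[OF nu tW] shift_prepend[OF nu tW] by auto
    have "?z (d (c nu g)) = c nu g" using Z_comp[OF zW(1) nu g(1) cn(2)] zW y1 by simp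
    hence "a = (if y (d (c nu g)) = c nu g then a else 0)"
      using C1[OF cn(1), of y] y y1 zW by (auto split: if_splits)
    thus "y (d (c nu g)) = c nu g" using a y y1(1) by (auto split: if_splits)
  next
    assume yB: "y (d (c nu g)) = c nu g"
    have y1: "y (d nu) = nu" "shift (d nu) y (d g) = g" using Z_comp[OF y nu g(1) cn(2)] yB by auto
    let ?t = "shift (d nu) y"
    have tW: "?t \<in> W" "?t 0 = s mu" using shift_W[OF y] shift_at0[OF y] y1 smn by auto
    let ?z = "prepend mu ?t"
    have zW: "?z \<in> W" "?z (d mu) = mu" "shift (d mu) ?z = ?t"
      using prepend_W[OF mu tW] prepend_at[OF mu tW] shift_prepend[OF mu tW] by auto
    have zA: "?z (d (c mu g)) = c mu g" using Z_comp[OF zW(1) mu g(1) cm(2)] zW y1 by simp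
    have py: "prepend nu ?t = y" using prepend_shift[OF y nu y1(1)] .
    have "(if y (d (c mu g)) = c mu g then a else 0) = a"
      using C1[OF cm(1), of ?z] zW zA py y by (auto split: if_splits)
    thus "y (d (c mu g)) = c mu g" using a by (auto split: if_splits)
  qed
qed

end



lemma freealg_fmul: assumes "f \<in> freealg L r d" "g \<in> freealg L r d" shows "fmul f g \<in> freealg L r d"
proof -
  have ff: "fin f" "fin g" using assms freealg_fin by auto
  have "fin (fmul f g)" using fin_fmul ff by blast
  moreover have "w \<noteq> [] \<and> (\<forall>x\<in>set w. validgen L r d x)" if "fmul f g w \<noteq> 0" for w
  proof -
    have "w \<in> (\<lambda>(u,v). u @ v) ` (supp f \<times> supp g)" using supp_fmul that by (auto simp: supp_def)
    then obtain u v where "w = u @ v" "f u \<noteq> 0" "g v \<noteq> 0" by (auto simp: supp_def)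
    thus ?thesis using assms unfolding freealg_def by auto
  qed
  ultimately show ?thesis unfolding freealg_def supp_def by blast
qed

lemma freealg_add: assumes "f \<in> freealg L r d" "g \<in> freealg L r d" shows "f + g \<in> freealg L r d"
proof -
  have "fin (f + g)" using fin_add assms freealg_fin by blast
  moreover have "w \<noteq> [] \<and> (\<forall>x\<in>set w. validgen L r d x)" if "(f + g) w \<noteq> 0" for w
  proof -
    have "f w \<noteq> 0 \<or> g w \<noteq> 0" using that by auto
    thus ?thesis using assms unfolding freealg_def by blast
  qed
  ultimately show ?thesis unfolding freealg_def supp_def by blast
qed

lemma freealg_zero: "0 \<in> freealg L r d"
  unfolding freealg_def by simp

lemma freealg_sum: "(\<And>i. i \<in> S \<Longrightarrow> F i \<in> freealg L r d) \<Longrightarrow> (\<Sum>i\<in>S. F i) \<in> freealg L r d"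
proof (induction S rule: infinite_finite_induct)
  case (infinite A) thus ?case using freealg_zero by (metis sum.infinite)
next
  case empty thus ?case using freealg_zero by (metis sum.empty)
next
  case (insert a S)
  have "F a + (\<Sum>i\<in>S. F i) \<in> freealg L r d" using insert freealg_add by blast
  thus ?case unfolding sum.insert[OF insert.hyps] .
qed

lemma freealg_gen: "validgen L r d x \<Longrightarrow> gen x \<in> freealg L r d"
  unfolding freealg_def gen_def by (auto intro: finite_subset[of _ "{[x]}"])

context kgr begin

lemma fa_pv: "v \<in> vertices L r \<Longrightarrow> pv v \<in> freealg L r d"
  unfolding pv_def by (rule freealg_gen) (simp add: validgen_def)

lemma fa_sp: assumes "l \<in> L" shows "sp d l \<in> freealg L r d"
proof -
  have "l \<in> vertices L r" if "d l = 0" using deg0[OF assms that] assms unfolding vertices_def by force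
  thus ?thesis unfolding sp_def using assms by (auto intro!: freealg_gen simp: validgen_def)
qed

lemma fa_sst: assumes "l \<in> L" shows "sst d l \<in> freealg L r d"
proof -
  have "l \<in> vertices L r" if "d l = 0" using deg0[OF assms that] assms unfolding vertices_def by force
  thus ?thesis unfolding sst_def using assms by (auto intro!: freealg_gen simp: validgen_def)
qed

lemma fa_proj: "l \<in> L \<Longrightarrow> proj l \<in> freealg L r d"
  using freealg_fmul fa_sp fa_sst by blast

abbreviation eqv :: "('p kpgen list \<Rightarrow> 'r::comm_ring_1) \<Rightarrow> ('p kpgen list \<Rightarrow> 'r) \<Rightarrow> bool" where
  "eqv x y \<equiv> kp_eq L r s c d x y"

lemma eqv_refl: "eqv x x"
  unfolding kp_eq_def using kp_ideal.zero by simp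

lemma eqv_sym: assumes "eqv x y" shows "eqv y x"
proof -
  have "fsmult (-1) (x - y) = y - x" by (simp add: fsmult_def fun_eq_iff)
  thus ?thesis using kp_ideal.smult[OF assms[unfolded kp_eq_def], of "-1"] unfolding kp_eq_def by simp
qed

lemma eqv_trans: assumes "eqv x y" "eqv y z" shows "eqv x z"
proof -
  have e: "x - z = (x - y) + (y - z)" by simp
  show ?thesis using kp_ideal.add[OF assms[unfolded kp_eq_def]] unfolding kp_eq_def e .
qed

lemma eqv_add: assumes "eqv x y" "eqv x' y'" shows "eqv (x + x') (y + y')"
proof -
  have e: "(x + x') - (y + y') = (x - y) + (x' - y')" by (simp add: algebra_simps)
  show ?thesis using kp_ideal.add[OF assms[unfolded kp_eq_def]] unfolding kp_eq_def e .
qed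

lemma eqv_sum: "(\<And>i. i \<in> S \<Longrightarrow> eqv (F i) (G i)) \<Longrightarrow> eqv (\<Sum>i\<in>S. F i) (\<Sum>i\<in>S. G i)"
proof (induction S rule: infinite_finite_induct)
  case (infinite A) thus ?case using eqv_refl by (metis sum.infinite)
next
  case empty thus ?case using eqv_refl by (metis sum.empty)
next
  case (insert a S)
  have "eqv (F a + (\<Sum>i\<in>S. F i)) (G a + (\<Sum>i\<in>S. G i))" using insert eqv_add by blast
  thus ?case unfolding sum.insert[OF insert.hyps] .
qed

lemma eqv_lmult: assumes "eqv x y" "z \<in> freealg L r d" shows "eqv (fmul z x) (fmul z y)"
  using kp_ideal.lmult[OF assms[unfolded kp_eq_def]] unfolding kp_eq_def fmul_diff_right .

lemma eqv_rmult: assumes "eqv x y" "z \<in> freealg L r d" shows "eqv (fmul x z) (fmul y z)"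
  using kp_ideal.rmult[OF assms[unfolded kp_eq_def]] unfolding kp_eq_def fmul_diff_left .

lemma eqv_mult: assumes "eqv x x'" "eqv y y'" "x' \<in> freealg L r d" "y \<in> freealg L r d"
  shows "eqv (fmul x y) (fmul x' y')"
  using eqv_trans[OF eqv_rmult[OF assms(1,4)] eqv_lmult[OF assms(2,3)]] .

lemma eqv_rel: "x - y \<in> kp_relators L r s c d \<Longrightarrow> eqv x y"
  unfolding kp_eq_def by (rule kp_ideal.rel)

lemma rel_kp1: "v \<in> vertices L r \<Longrightarrow> eqv (fmul (pv v) (pv v)) (pv v)"
  by (rule eqv_rel) (auto simp: kp_relators_def)

lemma rel_kp2a: "l \<in> L \<Longrightarrow> m \<in> L \<Longrightarrow> d l \<noteq> 0 \<Longrightarrow> d m \<noteq> 0 \<Longrightarrow> r m = s l \<Longrightarrow>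
    eqv (fmul (sp d l) (sp d m)) (sp d (c l m))"
  by (rule eqv_rel) (unfold kp_relators_def, blast)

lemma rel_kp2b: "l \<in> L \<Longrightarrow> m \<in> L \<Longrightarrow> d l \<noteq> 0 \<Longrightarrow> d m \<noteq> 0 \<Longrightarrow> r m = s l \<Longrightarrow>
    eqv (fmul (sst d m) (sst d l)) (sst d (c l m))"
  by (rule eqv_rel) (unfold kp_relators_def, blast)

lemma rel_kp2d: "l \<in> L \<Longrightarrow> d l \<noteq> 0 \<Longrightarrow> eqv (fmul (sp d l) (pv (s l))) (sp d l)"
  by (rule eqv_rel) (unfold kp_relators_def, blast)

lemma rel_kp4: "v \<in> vertices L r \<Longrightarrow> n \<noteq> 0 \<Longrightarrow>
    eqv (pv v) (\<Sum>l\<in>vLn L r d v n. fmul (sp d l) (sst d l))"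
  by (rule eqv_rel) (unfold kp_relators_def, blast)

lemma vLn_L: "b \<in> vLn L r d v n \<Longrightarrow> b \<in> L \<and> r b = v \<and> d b = n"
  unfolding vLn_def by auto

lemma proj_expand: assumes l: "l \<in> L"
  shows "eqv (proj l) (\<Sum>b\<in>vLn L r d (s l) n. proj (c l b))"
proof (cases "n = 0")
  case True
  have "vLn L r d (s l) n = {s l}"
    using True deg0 basic[OF l] unfolding vLn_def by auto
  thus ?thesis using basic[OF l] eqv_refl by simp
next
  case n0: False
  let ?V = "vLn L r d (s l) n"
  have sv: "s l \<in> vertices L r" using vert_s l .
  show ?thesis
  proof (cases "d l = 0")
    case True
    have ll: "r l = l" "s l = l" using deg0[OF l True] by auto
    have spl: "sp d l = pv l" "sst d l = pv l" unfolding sp_def sst_def pv_def using True by auto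
    have "eqv (proj l) (pv l)" unfolding spl using rel_kp1 sv ll by simp
    moreover have "eqv (pv l) (\<Sum>b\<in>?V. proj b)" using rel_kp4[OF sv n0] ll by simp
    moreover have "c l b = b" if "b \<in> ?V" for b using vLn_L[OF that] basic ll by metis
    ultimately show ?thesis using eqv_trans by simp
  next
    case dl: False
    have "eqv (proj l) (fmul (fmul (sp d l) (pv (s l))) (sst d l))"
      using eqv_sym[OF eqv_rmult[OF rel_kp2d[OF l dl] fa_sst[OF l]]] .
    also have "fmul (fmul (sp d l) (pv (s l))) (sst d l) = fmul (sp d l) (fmul (pv (s l)) (sst d l))"
      by (rule fmul_assoc)
    finally have e1: "eqv (proj l) (fmul (sp d l) (fmul (pv (s l)) (sst d l)))" .
    have e2: "eqv (fmul (sp d l) (fmul (pv (s l)) (sst d l)))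
        (fmul (sp d l) (fmul (\<Sum>b\<in>?V. proj b) (sst d l)))"
      by (rule eqv_lmult[OF eqv_rmult[OF rel_kp4[OF sv n0] fa_sst[OF l]] fa_sp[OF l]])
    have e3: "fmul (sp d l) (fmul (\<Sum>b\<in>?V. proj b) (sst d l))
        = (\<Sum>b\<in>?V. fmul (fmul (sp d l) (sp d b)) (fmul (sst d b) (sst d l)))"
      unfolding fmul_sum_left fmul_sum_right by (simp add: fmul_assoc)
    have e4: "eqv (\<Sum>b\<in>?V. fmul (fmul (sp d l) (sp d b)) (fmul (sst d b) (sst d l)))
        (\<Sum>b\<in>?V. proj (c l b))"
    proof (rule eqv_sum)
      fix b assume b: "b \<in> ?V"
      have bb: "b \<in> L" "r b = s l" "d b \<noteq> 0" using vLn_L[OF b] n0 by auto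
      have cb: "c l b \<in> L" using comp l bb by auto
      show "eqv (fmul (fmul (sp d l) (sp d b)) (fmul (sst d b) (sst d l))) (proj (c l b))"
        by (rule eqv_mult[OF rel_kp2a[OF l bb(1) dl bb(3,2)] rel_kp2b[OF l bb(1) dl bb(3,2)]
              fa_sp[OF cb] freealg_fmul[OF fa_sst[OF bb(1)] fa_sst[OF l]]])
    qed
    show ?thesis using eqv_trans[OF e1 eqv_trans[OF e2 e4[folded e3]]] .
  qed
qed

end



context kgr begin

lemma SA_sum:
  assumes A: "A \<in> L" and m: "d A \<le> m"
  shows "(\<Sum>l\<in>{l\<in>L. pre A l \<and> d l = m}. (proj l :: 'p kpgen list \<Rightarrow> 'r::comm_ring_1)) = (\<Sum>b\<in>vLn L r d (s A) (m - d A). proj (c A b))"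
proof (rule sum.reindex_cong[of "c A"])
  let ?V = "vLn L r d (s A) (m - d A)"
  show "inj_on (c A) ?V"
  proof (rule inj_onI)
    fix b b' assume "b \<in> ?V" "b' \<in> ?V" "c A b = c A b'"
    thus "b = b'" using vLn_L tail_eq A by metis
  qed
  show "{l \<in> L. pre A l \<and> d l = m} = c A ` ?V"
  proof
    show "c A ` ?V \<subseteq> {l \<in> L. pre A l \<and> d l = m}"
    proof
      fix l assume "l \<in> c A ` ?V"
      then obtain b where b: "b \<in> ?V" "l = c A b" by auto
      have bb: "b \<in> L" "r b = s A" "d b = m - d A" using vLn_L[OF b(1)] by auto
      have "d l = m" using comp(4)[OF A bb(1)] bb b(2) m by (simp add: le_fun_def fun_eq_iff)
      thus "l \<in> {l \<in> L. pre A l \<and> d l = m}" using comp(1)[OF A bb(1)] pre_comp[OF A bb(1)] bb b by auto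
    qed
    show "{l \<in> L. pre A l \<and> d l = m} \<subseteq> c A ` ?V"
    proof
      fix l assume l: "l \<in> {l \<in> L. pre A l \<and> d l = m}"
      let ?b = "tail A l"
      have bb: "?b \<in> L" "s A = r ?b" "c A ?b = l" using tail l by auto
      have "m = d A + d ?b" using tail_deg l by auto
      hence "d ?b = m - d A" by simp
      hence "?b \<in> ?V" using bb unfolding vLn_def by auto
      thus "l \<in> c A ` ?V" using bb by force
    qed
  qed
qed simp

lemma main:
  fixes a :: "'r::comm_ring_1"
  assumes mu: "mu \<in> L" and nu: "nu \<in> L" and smn: "s mu = s nu" and a: "a \<noteq> 0"
    and com: "in_commutant L r s c d (fsmult a (fmul (sp d mu) (sst d nu)))"
  shows "cycline_pair L r s c d TYPE('r) mu nu"
  unfolding cycline_pair_def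
proof (intro conjI ballI impI mu nu smn)
  fix g assume g: "g \<in> L" "r g = s mu"
  let ?A = "c mu g" let ?B = "c nu g"
  have AL: "?A \<in> L" using comp mu g by auto
  have BL: "?B \<in> L" using comp nu g smn by auto
  define m where "m = sup (d ?A) (d ?B)"
  have mA: "d ?A \<le> m" and mB: "d ?B \<le> m" unfolding m_def by auto
  have SS: "{l\<in>L. pre ?A l \<and> d l = m} = {l\<in>L. pre ?B l \<and> d l = m}"
  proof -
    have *: "pre Y l" if h: "pre X l" "l \<in> L" "d l = m" "d X \<le> m" "d Y \<le> m"
      and XY: "\<And>y. y \<in> W \<Longrightarrow> y (d X) = X \<Longrightarrow> y (d Y) = Y" for X Y l
    proof -
      obtain x where x: "x \<in> W" "x (d l) = l" using ext_ex h(2) by blast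
      have "x (d X) = X" using W_pre[OF x(1) h(4)] x h(1,3) pre_uniq W_d[OF x(1)] by metis
      hence "x (d Y) = Y" using XY x(1) by blast
      thus "pre Y l" using W_pre[OF x(1) h(5)] x h(3) by metis
    qed
    have ZE: "\<And>y. y \<in> W \<Longrightarrow> y (d ?A) = ?A \<longleftrightarrow> y (d ?B) = ?B"
      using Z_eq[OF mu nu smn a com g] by blast
    show ?thesis using *[OF _ _ _ mA mB] *[OF _ _ _ mB mA] ZE by blast
  qed
  have eA: "eqv (proj ?A :: 'p kpgen list \<Rightarrow> 'r) (\<Sum>l\<in>{l\<in>L. pre ?A l \<and> d l = m}. proj l)"
    using proj_expand[OF AL, of "m - d ?A", unfolded SA_sum[OF AL mA, symmetric]] .
  have eB: "eqv (proj ?B :: 'p kpgen list \<Rightarrow> 'r) (\<Sum>l\<in>{l\<in>L. pre ?B l \<and> d l = m}. proj l)"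
    using proj_expand[OF BL, of "m - d ?B", unfolded SA_sum[OF BL mB, symmetric]] .
  show "eqv (proj ?A :: 'p kpgen list \<Rightarrow> 'r) (proj ?B)"
    using eqv_trans[OF eA eqv_sym[OF eB[folded SS]]] .
qed

end

theorem lemma4p9:
  fixes L :: "'p set" and r s :: "'p \<Rightarrow> 'p" and c :: "'p \<Rightarrow> 'p \<Rightarrow> 'p"
    and d :: "'p \<Rightarrow> ('k::finite \<Rightarrow> nat)"
    and mu nu :: 'p and a :: "'r::comm_ring_1"
  assumes "kgraph L r s c d"
    and "row_finite_no_sources L r d"
    and "mu \<in> L" and "nu \<in> L" and "s mu = s nu"
    and "a \<noteq> 0"
    and "in_commutant L r s c d (fsmult a (fmul (sp d mu) (sst d nu)))"
  shows "cycline_pair L r s c d TYPE('r) mu nu"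
proof -
  interpret kgr L r s c d using assms(1,2) by unfold_locales
  show ?thesis using main assms(3-7) by blast
qed



end
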